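(* Let $A$ be a linearly ordered set, $a\in A$, and $H$ a passable game over $A$. Then (a) $[a]\lhd H$ or $H\le[a]$; and (b) $H\lhd[a]$ or $[a]\le H$.
   Context: Games over a poset $A$ are defined inductively: for each $a\in A$ there is an atomic game $[a]$, which has no options; and if $L$ and $R$ are non-empty sets of games, then $\{L\mid R\}$ is a composite game with left options $L$ and right options $R$. The relations $\le$ and $\lhd$ are defined by simultaneous recursion: $G\le H$ iff (1) every left option $G^L$ of $G$ satisfies $G^L\lhd H$, (2) every right option $H^R$ of $H$ satisfies $G\lhd H^R$, and (3) if $G$ or $H$ is atomic then $G\lhd H$; and $G\lhd H$ iff (1) some right option $G^R$ of $G$ satisfies $G^R\le H$, or (2) some left option $H^L$ of $H$ satisfies $G\le H^L$, or (3) $G=[a]$, $H=[b]$ are atomic and $a\le b$. A game $G$ is passable if $G\lhd G$ and recursively all its options are passable. *)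

theory Defs
  imports Main
begin

text \<open>A composite game carries its left and right options
  as partial families indexed by an arbitrary type 'i (the options are the values
  of the family); letting 'i range over all types covers games of any branching.\<close>

datatype ('a, 'i) game =
    Atom 'a
  | Comp "'i \<Rightarrow> ('a, 'i) game option" "'i \<Rightarrow> ('a, 'i) game option"

fun lopts :: "('a, 'i) game \<Rightarrow> ('a, 'i) game set" where
  "lopts (Atom a) = {}"
| "lopts (Comp L R) = {G. \<exists>i. L i = Some G}"

fun ropts :: "('a, 'i) game \<Rightarrow> ('a, 'i) game set" where
  "ropts (Atom a) = {}"
| "ropts (Comp L R) = {G. \<exists>i. R i = Some G}"

fun is_atom :: "('a, 'i) game \<Rightarrow> bool" where
  "is_atom (Atom a) = True"
| "is_atom (Comp L R) = False"

inductive wf_game :: "('a, 'i) game \<Rightarrow> bool" where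
  wf_atom: "wf_game (Atom a)"
| wf_comp: "lopts G \<noteq> {} \<Longrightarrow> ropts G \<noteq> {} \<Longrightarrow> \<not> is_atom G \<Longrightarrow>
     (\<forall>X \<in> lopts G. wf_game X) \<Longrightarrow> (\<forall>X \<in> ropts G. wf_game X) \<Longrightarrow> wf_game G"

text \<open>Since the
  recursion is well-founded, the inductive (least fixed point) definition gives
  exactly the recursively defined relations.\<close>
inductive game_le :: "('a::order, 'i) game \<Rightarrow> ('a, 'i) game \<Rightarrow> bool"
  and game_lf :: "('a::order, 'i) game \<Rightarrow> ('a, 'i) game \<Rightarrow> bool" where
  le_intro: "(\<forall>GL \<in> lopts G. game_lf GL H) \<Longrightarrow> (\<forall>HR \<in> ropts H. game_lf G HR) \<Longrightarrow>
     (is_atom G \<or> is_atom H \<longrightarrow> game_lf G H) \<Longrightarrow> game_le G H"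
| lf_right: "GR \<in> ropts G \<Longrightarrow> game_le GR H \<Longrightarrow> game_lf G H"
| lf_left: "HL \<in> lopts H \<Longrightarrow> game_le G HL \<Longrightarrow> game_lf G H"
| lf_atom: "a \<le> b \<Longrightarrow> game_lf (Atom a) (Atom b)"

inductive passable :: "('a::order, 'i) game \<Rightarrow> bool" where
  "game_lf G G \<Longrightarrow> (\<forall>X \<in> lopts G. passable X) \<Longrightarrow> (\<forall>X \<in> ropts G. passable X) \<Longrightarrow> passable G"

end

theory Submission
  imports Defs
begin

lemma game_induct2:
  assumes "\<And>G. (\<forall>X\<in>lopts G \<union> ropts G. P X) \<Longrightarrow> P G"
  shows "P G"
proof (induction G)
  case (Atom x)
  then show ?case using assms by simp
next
  case (Comp L R)
  show ?case
  proof (rule assms, safe)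
    fix X assume "X \<in> lopts (Comp L R)"
    then obtain i where "L i = Some X" by auto
    then show "P X" using Comp(1)[of "L i" X] by (metis option.set_intros rangeI)
  next
    fix X assume "X \<in> ropts (Comp L R)"
    then obtain i where "R i = Some X" by auto
    then show "P X" using Comp(2)[of "R i" X] by (metis option.set_intros rangeI)
  qed
qed

lemma le_inv: "game_le G H \<Longrightarrow> (\<forall>GL\<in>lopts G. game_lf GL H) \<and> (\<forall>HR\<in>ropts H. game_lf G HR)
   \<and> (is_atom G \<or> is_atom H \<longrightarrow> game_lf G H)"
  by (auto elim: game_le.cases)

lemma lf_inv: "game_lf G H \<Longrightarrow> (\<exists>GR\<in>ropts G. game_le GR H) \<or> (\<exists>HL\<in>lopts H. game_le G HL)
   \<or> (\<exists>a b. G = Atom a \<and> H = Atom b \<and> a \<le> b)"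
  by (auto elim: game_lf.cases)

lemma atom_le: "(a::'a::order) \<le> b \<Longrightarrow> game_le (Atom a) (Atom b)"
  by (rule le_intro) (auto intro: lf_atom)

lemma atom_le_inv: "game_le (Atom a) (Atom b) \<Longrightarrow> a \<le> b"
  using le_inv lf_inv by fastforce

lemma Ptrans:
  fixes a :: "'a::order" and X Y :: "('a,'i) game"
  shows "(game_lf (Atom a) X \<longrightarrow> game_le X Y \<longrightarrow> game_lf (Atom a) Y)
    \<and> (game_le (Atom a) X \<longrightarrow> game_le X Y \<longrightarrow> game_le (Atom a) Y)
    \<and> (game_le (Atom a) X \<longrightarrow> game_lf X Y \<longrightarrow> game_lf (Atom a) Y)"
proof (induction X arbitrary: Y rule: game_induct2)
  case (1 X)
  note IHX = "1"
  show ?case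
  proof (induction Y rule: game_induct2)
    case (1 Y)
    note IHY = "1"
    have P2: "game_lf (Atom a) Y" if h1: "game_lf (Atom a) X" and h2: "game_le X Y"
    proof -
      from lf_inv[OF h1] have "(\<exists>XL\<in>lopts X. game_le (Atom a) XL) \<or> (\<exists>b. X = Atom b \<and> a \<le> b)"
        by auto
      then show ?thesis
      proof
        assume "\<exists>XL\<in>lopts X. game_le (Atom a) XL"
        then obtain XL where "XL \<in> lopts X" "game_le (Atom a) XL" by blast
        moreover have "game_lf XL Y" using le_inv[OF h2] \<open>XL \<in> lopts X\<close> by blast
        ultimately show ?thesis using IHX by blast
      next
        assume "\<exists>b. X = Atom b \<and> a \<le> b"
        then obtain b where Xb: "X = Atom b" and ab: "a \<le> b" by blast
        have "game_lf X Y" using le_inv[OF h2] Xb by simp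
        from lf_inv[OF this] Xb have "(\<exists>YL\<in>lopts Y. game_le X YL) \<or> (\<exists>c. Y = Atom c \<and> b \<le> c)"
          by auto
        then show ?thesis
        proof
          assume "\<exists>YL\<in>lopts Y. game_le X YL"
          then obtain YL where "YL \<in> lopts Y" "game_le X YL" by blast
          moreover have "game_le (Atom a) X" using Xb ab atom_le by blast
          ultimately have "game_le (Atom a) YL" using IHY by blast
          then show ?thesis using \<open>YL \<in> lopts Y\<close> lf_left by blast
        next
          assume "\<exists>c. Y = Atom c \<and> b \<le> c"
          then show ?thesis using ab by (auto intro: lf_atom order_trans)
        qed
      qed
    qed
    have P1: "game_le (Atom a) Y" if h1: "game_le (Atom a) X" and h2: "game_le X Y"
    proof (rule le_intro)
      show "\<forall>GL\<in>lopts (Atom a). game_lf GL Y" by simp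
      show "\<forall>HR\<in>ropts Y. game_lf (Atom a) HR"
      proof
        fix YR assume "YR \<in> ropts Y"
        then have "game_lf X YR" using le_inv[OF h2] by blast
        then show "game_lf (Atom a) YR" using IHY h1 \<open>YR \<in> ropts Y\<close> by blast
      qed
      show "is_atom (Atom a) \<or> is_atom Y \<longrightarrow> game_lf (Atom a) Y"
        using P2 le_inv[OF h1] h2 by simp
    qed
    have P3: "game_lf (Atom a) Y" if h1: "game_le (Atom a) X" and h2: "game_lf X Y"
    proof -
      from lf_inv[OF h2] show ?thesis
      proof (elim disjE)
        assume "\<exists>XR\<in>ropts X. game_le XR Y"
        then obtain XR where "XR \<in> ropts X" "game_le XR Y" by blast
        moreover have "game_lf (Atom a) XR" using le_inv[OF h1] \<open>XR \<in> ropts X\<close> by blast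
        ultimately show ?thesis using IHX by blast
      next
        assume "\<exists>YL\<in>lopts Y. game_le X YL"
        then obtain YL where "YL \<in> lopts Y" "game_le X YL" by blast
        then have "game_le (Atom a) YL" using IHY h1 by blast
        then show ?thesis using \<open>YL \<in> lopts Y\<close> lf_left by blast
      next
        assume "\<exists>b c. X = Atom b \<and> Y = Atom c \<and> b \<le> c"
        then obtain b c where "X = Atom b" "Y = Atom c" "b \<le> c" by blast
        moreover have "a \<le> b" using atom_le_inv h1 \<open>X = Atom b\<close> by blast
        ultimately show ?thesis by (auto intro: lf_atom order_trans)
      qed
    qed
    show ?case using P1 P2 P3 by blast
  qed
qed

lemma Qtrans:
  fixes a :: "'a::order" and X Y :: "('a,'i) game"
  shows "(game_le X Y \<longrightarrow> game_lf Y (Atom a) \<longrightarrow> game_lf X (Atom a))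
    \<and> (game_le X Y \<longrightarrow> game_le Y (Atom a) \<longrightarrow> game_le X (Atom a))
    \<and> (game_lf X Y \<longrightarrow> game_le Y (Atom a) \<longrightarrow> game_lf X (Atom a))"
proof (induction Y arbitrary: X rule: game_induct2)
  case (1 Y)
  note IHY = "1"
  show ?case
  proof (induction X rule: game_induct2)
    case (1 X)
    note IHX = "1"
    have Q2: "game_lf X (Atom a)" if h1: "game_le X Y" and h2: "game_lf Y (Atom a)"
    proof -
      from lf_inv[OF h2] have "(\<exists>YR\<in>ropts Y. game_le YR (Atom a)) \<or> (\<exists>b. Y = Atom b \<and> b \<le> a)"
        by auto
      then show ?thesis
      proof
        assume "\<exists>YR\<in>ropts Y. game_le YR (Atom a)"
        then obtain YR where "YR \<in> ropts Y" "game_le YR (Atom a)" by blast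
        moreover have "game_lf X YR" using le_inv[OF h1] \<open>YR \<in> ropts Y\<close> by blast
        ultimately show ?thesis using IHY by blast
      next
        assume "\<exists>b. Y = Atom b \<and> b \<le> a"
        then obtain b where Yb: "Y = Atom b" and ba: "b \<le> a" by blast
        have "game_lf X Y" using le_inv[OF h1] Yb by simp
        from lf_inv[OF this] Yb have "(\<exists>XR\<in>ropts X. game_le XR Y) \<or> (\<exists>c. X = Atom c \<and> c \<le> b)"
          by auto
        then show ?thesis
        proof
          assume "\<exists>XR\<in>ropts X. game_le XR Y"
          then obtain XR where "XR \<in> ropts X" "game_le XR Y" by blast
          moreover have "game_le Y (Atom a)" using Yb ba atom_le by blast
          ultimately have "game_le XR (Atom a)" using IHX by blast
          then show ?thesis using \<open>XR \<in> ropts X\<close> lf_right by blast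
        next
          assume "\<exists>c. X = Atom c \<and> c \<le> b"
          then show ?thesis using ba by (auto intro: lf_atom order_trans)
        qed
      qed
    qed
    have Q1: "game_le X (Atom a)" if h1: "game_le X Y" and h2: "game_le Y (Atom a)"
    proof (rule le_intro)
      show "\<forall>HR\<in>ropts (Atom a). game_lf X HR" by simp
      show "\<forall>XL\<in>lopts X. game_lf XL (Atom a)"
      proof
        fix XL assume "XL \<in> lopts X"
        then have "game_lf XL Y" using le_inv[OF h1] by blast
        then show "game_lf XL (Atom a)" using IHX h2 \<open>XL \<in> lopts X\<close> by blast
      qed
      show "is_atom X \<or> is_atom (Atom a) \<longrightarrow> game_lf X (Atom a)"
        using Q2 le_inv[OF h2] h1 by simp
    qed
    have Q3: "game_lf X (Atom a)" if h1: "game_lf X Y" and h2: "game_le Y (Atom a)"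
    proof -
      from lf_inv[OF h1] show ?thesis
      proof (elim disjE)
        assume "\<exists>XR\<in>ropts X. game_le XR Y"
        then obtain XR where "XR \<in> ropts X" "game_le XR Y" by blast
        then have "game_le XR (Atom a)" using IHX h2 by blast
        then show ?thesis using \<open>XR \<in> ropts X\<close> lf_right by blast
      next
        assume "\<exists>YL\<in>lopts Y. game_le X YL"
        then obtain YL where "YL \<in> lopts Y" "game_le X YL" by blast
        moreover have "game_lf YL (Atom a)" using le_inv[OF h2] \<open>YL \<in> lopts Y\<close> by blast
        ultimately show ?thesis using IHY by blast
      next
        assume "\<exists>c b. X = Atom c \<and> Y = Atom b \<and> c \<le> b"
        then obtain b c where "X = Atom c" "Y = Atom b" "c \<le> b" by blast
        moreover have "b \<le> a" using atom_le_inv h2 \<open>Y = Atom b\<close> by blast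
        ultimately show ?thesis by (auto intro: lf_atom order_trans)
      qed
    qed
    show ?case using Q1 Q2 Q3 by blast
  qed
qed

lemma main:
  fixes a :: "'a::linorder" and H :: "('a, 'i) game"
  assumes "passable H"
  shows "(game_lf (Atom a) H \<or> game_le H (Atom a)) \<and> (game_lf H (Atom a) \<or> game_le (Atom a) H)"
  using assms
proof (induction H rule: passable.induct)
  case (1 H)
  show ?case
  proof (cases H)
    case (Atom b)
    show ?thesis
    proof (cases "a \<le> b")
      case True
      then show ?thesis using Atom atom_le lf_atom by blast
    next
      case False
      then have "b \<le> a" by auto
      then show ?thesis using Atom atom_le lf_atom by blast
    qed
  next
    case (Comp L R)
    have A: "game_le H (Atom a)" if na: "\<not> game_lf (Atom a) H"
    proof (rule le_intro)
      show "\<forall>HR\<in>ropts (Atom a). game_lf H HR" by simp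
      have HL: "\<forall>HL\<in>lopts H. game_lf HL (Atom a)"
        using 1(2) na lf_left by blast
      then show "\<forall>HL\<in>lopts H. game_lf HL (Atom a)" .
      have "game_lf H (Atom a)"
        using lf_inv[OF 1(1)]
      proof (elim disjE)
        assume "\<exists>HR\<in>ropts H. game_le HR H"
        then obtain HR where "HR \<in> ropts H" "game_le HR H" by blast
        then show ?thesis using 1(3) na Ptrans lf_right by blast
      next
        assume "\<exists>HL\<in>lopts H. game_le H HL"
        then obtain HL where "HL \<in> lopts H" "game_le H HL" by blast
        then show ?thesis using HL Qtrans by blast
      next
        assume "\<exists>c b. H = Atom c \<and> H = Atom b \<and> c \<le> b"
        then show ?thesis using Comp by auto
      qed
      then show "is_atom H \<or> is_atom (Atom a) \<longrightarrow> game_lf H (Atom a)" by simp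
    qed
    have B: "game_le (Atom a) H" if na: "\<not> game_lf H (Atom a)"
    proof (rule le_intro)
      show "\<forall>GL\<in>lopts (Atom a). game_lf GL H" by simp
      have HR: "\<forall>HR\<in>ropts H. game_lf (Atom a) HR"
        using 1(3) na lf_right by blast
      then show "\<forall>HR\<in>ropts H. game_lf (Atom a) HR" .
      have "game_lf (Atom a) H"
        using lf_inv[OF 1(1)]
      proof (elim disjE)
        assume "\<exists>HR\<in>ropts H. game_le HR H"
        then obtain HR where "HR \<in> ropts H" "game_le HR H" by blast
        then show ?thesis using HR Ptrans by blast
      next
        assume "\<exists>HL\<in>lopts H. game_le H HL"
        then obtain HL where "HL \<in> lopts H" "game_le H HL" by blast
        then show ?thesis using 1(2) na Qtrans lf_left by blast
      next
        assume "\<exists>c b. H = Atom c \<and> H = Atom b \<and> c \<le> b"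
        then show ?thesis using Comp by auto
      qed
      then show "is_atom (Atom a) \<or> is_atom H \<longrightarrow> game_lf (Atom a) H" by simp
    qed
    show ?thesis using A B by blast
  qed
qed

theorem lemma7p1:
  fixes a :: "'a::linorder" and H :: "('a, 'i) game"
  assumes "wf_game H" and "passable H"
  shows "(game_lf (Atom a) H \<or> game_le H (Atom a)) \<and> (game_lf H (Atom a) \<or> game_le (Atom a) H)"
  using main assms(2) by blast

end
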